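(* Assume (A1)–(A3), and let $\varepsilon\in(0,1)$ be such that $\mathbb{E}[\xi^\varepsilon]<\infty$ and $\gamma-1-\varepsilon>0$. Let $p>0$ and let $g:[0,\infty)\to\mathbb{R}$ be a continuous function satisfying, for all $u>0$, \[ g(u)=\frac{\mu}{u^\gamma e^{-\alpha/u}}\int_0^u t^{\gamma-2}e^{-\alpha/t}\Big(p\,\bar F(t)+\int_0^t g(z)\bar F(t-z)\,dz\Big)dt. \] Then $g(u)=O(u^{-1-\varepsilon})$ as $u\to\infty$; in particular $g\in L^1(\mathbb{R}_+)$.
   Context: $\xi$ is a positive random variable with distribution function $F$, $\bar F=1-F$. Parameters: $\kappa\in(0,1]$, $a\in\mathbb{R}$, $r\ge0$, $\sigma>0$, $c>0$, $\lambda>0$, $\gamma=\dfrac{2((a-r)\kappa+r)}{\kappa^2\sigma^2}$, $\alpha=\dfrac{2c}{\kappa^2\sigma^2}$, $\mu=\dfrac{2\lambda}{\kappa^2\sigma^2}$. Assumptions: (A1) $F(0)=0$; (A2) there is $\varepsilon>0$ with $\mathbb{E}[\xi^\varepsilon]<\infty$; (A3) $\gamma>1$. *)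

theory Defs
  imports "HOL-Probability.Probability"
begin

definition distr_fun :: "'a measure \<Rightarrow> ('a \<Rightarrow> real) \<Rightarrow> real \<Rightarrow> real" where
  "distr_fun M xi t = measure M {\<omega> \<in> space M. xi \<omega> \<le> t}"

definition tail_fun :: "'a measure \<Rightarrow> ('a \<Rightarrow> real) \<Rightarrow> real \<Rightarrow> real" where
  "tail_fun M xi t = 1 - distr_fun M xi t"

end

theory Submission
  imports Defs
begin

lemma L1:
  fixes f b :: "real \<Rightarrow> real"
  assumes "set_integrable lborel S b" "\<And>x. x \<in> S \<Longrightarrow> \<bar>f x\<bar> \<le> b x"
  shows "\<bar>LINT x:S|lborel. f x\<bar> \<le> (LINT x:S|lborel. b x)"
proof (cases "integrable lborel (\<lambda>x. indicator S x *\<^sub>R f x)")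
  case True
  have "norm (\<integral>x. indicator S x *\<^sub>R f x \<partial>lborel) \<le> (\<integral>x. indicator S x *\<^sub>R b x \<partial>lborel)"
    apply (rule Bochner_Integration.integral_norm_bound_integral[OF True])
    using assms unfolding set_integrable_def by (auto simp: indicator_def)
  then show ?thesis by (simp add: set_lebesgue_integral_def)
next
  case False
  have "0 \<le> (\<integral>x. indicator S x *\<^sub>R b x \<partial>lborel)"
  proof (rule Bochner_Integration.integral_nonneg)
    fix x show "0 \<le> indicator S x *\<^sub>R b x"
      using assms(2)[of x] by (auto simp: indicator_def)
  qed
  then show ?thesis using False by (simp add: set_lebesgue_integral_def not_integrable_integral_eq)
qed

lemma FTC0:
  fixes f F :: "real \<Rightarrow> real"
  assumes "0 < t" "\<And>x. 0<x \<Longrightarrow> x<t \<Longrightarrow> DERIV F x :> f x"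
    "\<And>x. 0<x \<Longrightarrow> x<t \<Longrightarrow> isCont f x" "\<And>x. 0<x \<Longrightarrow> x<t \<Longrightarrow> 0 \<le> f x"
    "(F \<longlongrightarrow> A) (at_right 0)" "(F \<longlongrightarrow> B) (at_left t)"
  shows "set_integrable lborel {0<..<t} f" "(LINT x:{0<..<t}|lborel. f x) = B - A"
proof -
  have "ereal 0 < ereal t" using assms by simp
  note R = interval_integral_FTC_nonneg[OF this, of F f A B]
  have h: "AE x in lborel. ereal 0 < ereal x \<longrightarrow> ereal x < ereal t \<longrightarrow> 0 \<le> f x"
    using assms by auto
  show "set_integrable lborel {0<..<t} f" using R(1)[OF _ _ h] assms by (simp add: ereal_tendsto_simps1)
  show "(LINT x:{0<..<t}|lborel. f x) = B - A" using R(2)[OF _ _ h] assms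
    by (simp add: ereal_tendsto_simps1 interval_lebesgue_integral_def)
qed

lemma FTCinf:
  fixes f F :: "real \<Rightarrow> real"
  assumes "\<And>x. 0<x \<Longrightarrow> DERIV F x :> f x"
    "\<And>x. 0<x \<Longrightarrow> isCont f x" "\<And>x. 0<x \<Longrightarrow> 0 \<le> f x"
    "(F \<longlongrightarrow> A) (at_right 0)" "(F \<longlongrightarrow> B) at_top"
  shows "set_integrable lborel {0<..} f"
proof -
  have "ereal 0 < \<infinity>" by simp
  note R = interval_integral_FTC_nonneg[OF this, of F f A B]
  have h: "AE x in lborel. ereal 0 < ereal x \<longrightarrow> ereal x < \<infinity> \<longrightarrow> 0 \<le> f x"
    using assms by auto
  show ?thesis using R(1)[OF _ _ h] assms by (simp add: ereal_tendsto_simps1)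
qed

lemma Int1:
  fixes t b :: real assumes t: "0 < t" and b: "b > -1"
  shows "set_integrable lborel {0<..<t} (\<lambda>x. x powr b)"
    "(LINT x:{0<..<t}|lborel. x powr b) = t powr (b+1) / (b+1)"
proof -
  let ?F = "\<lambda>x::real. x powr (b+1) / (b+1)"
  have d: "DERIV ?F x :> x powr b" if "0<x" for x
  proof -
    have "DERIV (\<lambda>x. x powr (b+1)) x :> (b+1) * x powr (b+1-1)"
      by (rule has_real_derivative_powr) fact
    from DERIV_cdivide[OF this, of "b+1"] show ?thesis using b by simp
  qed
  have c: "isCont (\<lambda>x. x powr b) x" if "0<x" for x
    using that by (auto intro!: continuous_intros)
  have A: "(?F \<longlongrightarrow> 0) (at_right 0)"
  proof -
    have "((\<lambda>x::real. x powr (b+1)) \<longlongrightarrow> 0) (at_right 0)"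
      using b by (intro tendsto_zero_powrI) (auto intro!: tendsto_ident_at eventually_at_rightI[of 0 1])
    then show ?thesis using tendsto_divide_zero by blast
  qed
  have B: "(?F \<longlongrightarrow> ?F t) (at_left t)"
    using t b by (intro tendsto_intros) (auto simp: filterlim_at_split)
  note R = FTC0[OF t _ _ _ A B, of "\<lambda>x. x powr b"]
  show "set_integrable lborel {0<..<t} (\<lambda>x. x powr b)" using R d c by auto
  show "(LINT x:{0<..<t}|lborel. x powr b) = t powr (b+1) / (b+1)" using R d c by auto
qed

lemma DERIV_F2: assumes "0 < e" "0 \<le> z"
  shows "DERIV (\<lambda>z::real. - ((1+z) powr (-e)) / e) z :> (1+z) powr (-1-e)"
proof -
  have "DERIV (\<lambda>z::real. (1+z) powr (-e)) z :> (-e) * (1+z) powr (-e - of_nat 1) * 1"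
    by (rule DERIV_fun_powr) (use assms in \<open>auto intro!: derivative_eq_intros\<close>)
  from DERIV_cdivide[OF DERIV_minus[OF this], of e]
  have "DERIV (\<lambda>z::real. - ((1+z) powr (-e)) / e) z :> - ((-e) * (1+z) powr (-e - of_nat 1) * 1) / e" .
  moreover have "- ((-e) * (1+z) powr (-e - of_nat 1) * 1) / e = (1+z) powr (-1-e)"
  proof -
    have "(1+z) powr (-e - of_nat 1) = (1+z) powr (-1-e)"
      by (rule arg_cong[where f="\<lambda>x. (1+z) powr x"]) simp
    then show ?thesis using assms by simp
  qed
  ultimately show ?thesis by simp
qed

lemma Int2:
  fixes t e :: real assumes t: "0 < t" and e: "e > 0"
  shows "set_integrable lborel {0<..<t} (\<lambda>z. (1+z) powr (-1-e))"
    "(LINT z:{0<..<t}|lborel. (1+z) powr (-1-e)) \<le> 1/e"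
proof -
  let ?F = "\<lambda>z::real. - ((1+z) powr (-e)) / e"
  have c: "isCont (\<lambda>z::real. (1+z) powr (-1-e)) x" if "0<x" for x
    using that by (auto intro!: continuous_intros)
  have A: "(?F \<longlongrightarrow> ?F 0) (at_right 0)"
    using e by (intro tendsto_intros) (auto simp: filterlim_at_split)
  have B: "(?F \<longlongrightarrow> ?F t) (at_left t)"
    using t e by (intro tendsto_intros) (auto simp: filterlim_at_split)
  note R = FTC0[OF t _ _ _ A B, of "\<lambda>z. (1+z) powr (-1-e)"]
  show "set_integrable lborel {0<..<t} (\<lambda>z. (1+z) powr (-1-e))" using R DERIV_F2[OF e] c by auto
  have "(LINT z:{0<..<t}|lborel. (1+z) powr (-1-e)) = ?F t - ?F 0" using R DERIV_F2[OF e] c by auto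
  also have "\<dots> \<le> 1/e" using e t by (simp add: divide_simps)
  finally show "(LINT z:{0<..<t}|lborel. (1+z) powr (-1-e)) \<le> 1/e" .
qed

lemma Int4:
  fixes e :: real assumes e: "e > 0"
  shows "set_integrable lborel {0<..} (\<lambda>z. (1+z) powr (-1-e))"
proof -
  let ?F = "\<lambda>z::real. - ((1+z) powr (-e)) / e"
  have c: "isCont (\<lambda>z::real. (1+z) powr (-1-e)) x" if "0<x" for x
    using that by (auto intro!: continuous_intros)
  have A: "(?F \<longlongrightarrow> ?F 0) (at_right 0)"
    using e by (intro tendsto_intros) (auto simp: filterlim_at_split)
  have "((\<lambda>z::real. (1+z) powr (-e)) \<longlongrightarrow> 0) at_top"
    using e by (intro tendsto_neg_powr) (auto intro!: filterlim_tendsto_add_at_top[OF tendsto_const filterlim_ident])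
  then have B: "(?F \<longlongrightarrow> - 0 / e) at_top"
    using e by (intro tendsto_intros) auto
  show ?thesis using FTCinf[OF _ _ _ A B, of "\<lambda>z. (1+z) powr (-1-e)"] DERIV_F2[OF e] c by auto
qed

lemma DERIV_F3: assumes "0 < e" "e < 1" "z < 1 + t"
  shows "DERIV (\<lambda>z::real. - ((1+t-z) powr (1-e)) / (1-e)) z :> (1+t-z) powr (-e)"
proof -
  have "DERIV (\<lambda>z::real. (1+t-z) powr (1-e)) z :> (1-e) * (1+t-z) powr (1-e - of_nat 1) * (-1)"
    by (rule DERIV_fun_powr) (use assms in \<open>auto intro!: derivative_eq_intros\<close>)
  from DERIV_cdivide[OF DERIV_minus[OF this], of "1-e"]
  have "DERIV (\<lambda>z::real. - ((1+t-z) powr (1-e)) / (1-e)) z :> - ((1-e) * (1+t-z) powr (1-e - of_nat 1) * (-1)) / (1-e)" .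
  moreover have "- ((1-e) * (1+t-z) powr (1-e - of_nat 1) * (-1)) / (1-e) = (1+t-z) powr (-e)"
  proof -
    have "1-e - of_nat 1 = -e" by simp
    then show ?thesis using assms by simp
  qed
  ultimately show ?thesis by simp
qed

lemma Int3:
  fixes t e :: real assumes t: "0 < t" and e: "e > 0" "e < 1"
  shows "set_integrable lborel {0<..<t} (\<lambda>z. (1+t-z) powr (-e))"
    "(LINT z:{0<..<t}|lborel. (1+t-z) powr (-e)) \<le> (1+t) powr (1-e) / (1-e)"
proof -
  let ?F = "\<lambda>z::real. - ((1+t-z) powr (1-e)) / (1-e)"
  have c: "isCont (\<lambda>z::real. (1+t-z) powr (-e)) x" if "x<t" for x
    using that by (auto intro!: continuous_intros)
  have A: "(?F \<longlongrightarrow> ?F 0) (at_right 0)"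
    using e t by (intro tendsto_intros) (auto simp: filterlim_at_split)
  have B: "(?F \<longlongrightarrow> ?F t) (at_left t)"
    using t e by (intro tendsto_intros) (auto simp: filterlim_at_split)
  have d: "DERIV ?F x :> (1+t-x) powr (-e)" if "x < t" for x
    using DERIV_F3[OF e, of x t] that by simp
  note R = FTC0[OF t _ _ _ A B, of "\<lambda>z. (1+t-z) powr (-e)"]
  show "set_integrable lborel {0<..<t} (\<lambda>z. (1+t-z) powr (-e))" using R d c by auto
  have "(LINT z:{0<..<t}|lborel. (1+t-z) powr (-e)) = ?F t - ?F 0" using R d c by auto
  also have "\<dots> \<le> (1+t) powr (1-e) / (1-e)" using e t by (simp add: divide_simps)
  finally show "(LINT z:{0<..<t}|lborel. (1+t-z) powr (-e)) \<le> (1+t) powr (1-e) / (1-e)" .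
qed

lemma tail_bounds:
  fixes M :: "'a measure" and xi :: "'a \<Rightarrow> real" and e :: real
  assumes M: "prob_space M" and xi: "xi \<in> borel_measurable M"
    and e: "0 < e" "e < 1" and mom: "integrable M (\<lambda>\<omega>. xi \<omega> powr e)"
  defines "B \<equiv> (\<integral>\<omega>. xi \<omega> powr e \<partial>M)"
  shows "0 \<le> B" "\<And>t. 0 \<le> tail_fun M xi t" "\<And>t. tail_fun M xi t \<le> 1"
    "\<And>t. 0 < t \<Longrightarrow> tail_fun M xi t \<le> 2 * (1 + B) * (1 + t) powr (-e)"
proof -
  interpret prob_space M by fact
  show B0: "0 \<le> B" unfolding B_def by (rule Bochner_Integration.integral_nonneg) auto
  have ev: "{\<omega> \<in> space M. xi \<omega> \<le> t} \<in> sets M" for t using xi by measurable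
  show "0 \<le> tail_fun M xi t" for t unfolding tail_fun_def distr_fun_def by simp
  show "tail_fun M xi t \<le> 1" for t unfolding tail_fun_def distr_fun_def by simp
  have tl: "tail_fun M xi t = prob {\<omega> \<in> space M. t < xi \<omega>}" for t
  proof -
    have "space M - {\<omega> \<in> space M. xi \<omega> \<le> t} = {\<omega> \<in> space M. t < xi \<omega>}" by auto
    then show ?thesis using prob_compl[OF ev[of t]] unfolding tail_fun_def distr_fun_def by simp
  qed
  have mk: "tail_fun M xi t \<le> B / t powr e" if t: "0 < t" for t
  proof -
    have "{\<omega> \<in> space M. t < xi \<omega>} \<subseteq> {\<omega> \<in> space M. t powr e \<le> xi \<omega> powr e}"
      using t e by (auto intro!: powr_mono2)
    moreover have "{\<omega> \<in> space M. t powr e \<le> xi \<omega> powr e} \<in> sets M" using xi by measurable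
    ultimately have "prob {\<omega> \<in> space M. t < xi \<omega>} \<le> prob {\<omega> \<in> space M. t powr e \<le> xi \<omega> powr e}"
      by (rule finite_measure_mono)
    also have "\<dots> \<le> B / t powr e" unfolding B_def
      by (rule integral_Markov_inequality_measure[OF mom, where A="space M"]) (use t in auto)
    finally show ?thesis using tl by simp
  qed
  show "tail_fun M xi t \<le> 2 * (1 + B) * (1 + t) powr (-e)" if t: "0 < t" for t
  proof (cases "t \<le> 1")
    case True
    have "(1+t) powr e \<le> 2 powr e" using True t e by (intro powr_mono2) auto
    also have "\<dots> \<le> 2 powr 1" using e by (intro powr_mono) auto
    finally have a: "(1+t) powr e \<le> 2" by simp
    have "(1+t) powr (-e) = 1 / (1+t) powr e" using t by (simp add: powr_minus divide_simps)
    also have "\<dots> \<ge> 1/2" using a t by (simp add: divide_simps)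
    finally have "(1+t) powr (-e) \<ge> 1/2" .
    then have "2 * (1 + B) * (1 + t) powr (-e) \<ge> 2 * (1+B) * (1/2)" using B0
      by (intro mult_left_mono) auto
    moreover have "2 * (1+B) * (1/2) \<ge> 1" using B0 by simp
    ultimately show ?thesis using \<open>tail_fun M xi t \<le> 1\<close> by linarith
  next
    case False
    have "(1+t) powr e \<le> (2*t) powr e" using False t e by (intro powr_mono2) auto
    also have "\<dots> = 2 powr e * t powr e" using t by (simp add: powr_mult)
    also have "\<dots> \<le> 2 * t powr e"
    proof -
      have "2 powr e \<le> 2 powr 1" using e by (intro powr_mono) auto
      then show ?thesis by (intro mult_right_mono) auto
    qed
    finally have a: "(1+t) powr e \<le> 2 * t powr e" .
    have tp: "0 < t powr e" using t by simp
    have "B / t powr e \<le> 2 * (1 + B) / (1+t) powr e"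
    proof -
      have "B * (1+t) powr e \<le> (1+B) * (2 * t powr e)"
        using a B0 by (intro mult_mono) auto
      then show ?thesis using tp t by (simp add: divide_simps algebra_simps)
    qed
    also have "\<dots> = 2 * (1 + B) * (1 + t) powr (-e)" using t by (simp add: powr_minus divide_simps)
    finally show ?thesis using mk[OF t] by simp
  qed
qed

lemma powr_split: fixes x :: real shows "a = b + c \<Longrightarrow> x powr a = x powr b * x powr c"
  by (simp only: powr_add)

lemma powr_split3: fixes x :: real shows "a = b + c + d \<Longrightarrow> x powr a = x powr b * x powr c * x powr d"
  by (simp only: powr_add)

lemma pw:
  fixes e K0 S U0 C0 az Tv t z :: real
  assumes e: "0 < e" "e < 1" and z: "0 < z" "z < t" and U0: "0 \<le> U0"
    and K0: "0 \<le> K0" and S: "0 \<le> S" and C0: "0 \<le> C0"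
    and az: "0 \<le> az" "z \<le> U0 \<Longrightarrow> az \<le> K0" "az \<le> S * (1+z) powr (-1-e)"
    and Tv: "0 \<le> Tv" "Tv \<le> C0 * (1+t-z) powr (-e)"
  shows "az * Tv \<le> (1+t) powr (-e) * (K0*C0*(1+U0) powr (1+2*e) * (1+z) powr (-1-e)
     + S*(C0*2 powr (1+e))*(1+U0) powr (-e/2) * ((1+z) powr (-1-e/2) + (1+t) powr (-1+e/2) * (1+t-z) powr (-e)))"
    (is "_ \<le> ?R * (?X + ?Y * (?a + ?b))")
proof -
  define P where "P = 1+z"
  define Q where "Q = 1+t-z"
  define R where "R = 1+t"
  have P1: "1 \<le> P" and Q1: "1 \<le> Q" and R1: "1 \<le> R" using z by (auto simp: P_def Q_def R_def)
  have RPQ: "R \<le> P * Q" using z unfolding P_def Q_def R_def by (simp add: algebra_simps)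
  have nn: "0 \<le> ?R" "0 \<le> ?X" "0 \<le> ?Y" "0 \<le> ?a" "0 \<le> ?b" using K0 S C0 by auto
  have base: "az * Tv \<le> az * (C0 * Q powr (-e))" using az Tv unfolding Q_def by (intro mult_left_mono) auto
  show ?thesis
  proof (cases "z \<le> U0")
    case True
    have "az * Tv \<le> K0 * (C0 * Q powr (-e))" using base az(2)[OF True] C0 by (meson mult_right_mono order_trans zero_le_mult_iff powr_ge_zero)
    also have "Q powr (-e) \<le> R powr (-e) * ((1+U0) powr (1+2*e) * P powr (-1-e))"
    proof -
      have "R powr e \<le> P powr e * Q powr e" using RPQ R1 e by (metis powr_mono2 powr_mult less_imp_le order.trans zero_le_one)
      then have a: "Q powr (-e) \<le> R powr (-e) * P powr e" using P1 Q1 R1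
        by (simp add: powr_minus divide_simps mult.commute)
      have "P powr (1+2*e) \<le> (1+U0) powr (1+2*e)" using True P1 e unfolding P_def by (intro powr_mono2) auto
      then have "P powr (1+2*e) * P powr (-1-e) \<le> (1+U0) powr (1+2*e) * P powr (-1-e)"
        by (intro mult_right_mono) auto
      moreover have "P powr (1+2*e) * P powr (-1-e) = P powr e" by (rule powr_split[symmetric]) simp
      ultimately have "P powr e \<le> (1+U0) powr (1+2*e) * P powr (-1-e)" by simp
      with a show ?thesis by (meson mult_left_mono order_trans powr_ge_zero)
    qed
    then have "K0 * (C0 * Q powr (-e)) \<le> K0 * (C0 * (R powr (-e) * ((1+U0) powr (1+2*e) * P powr (-1-e))))"
      using K0 C0 by (intro mult_left_mono) auto
    also have "\<dots> = ?R * ?X" unfolding P_def R_def by (simp add: algebra_simps)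
    also have "\<dots> \<le> ?R * (?X + ?Y * (?a + ?b))" using nn by (intro mult_left_mono) auto
    finally show ?thesis .
  next
    case False
    have rho1: "x powr (-e/2) \<le> (1+U0) powr (-e/2)" if "1+U0 \<le> x" for x
      using that U0 e by (intro powr_mono2') auto
    have two: "2 powr e \<le> 2 powr (1+e)" by (intro powr_mono) auto
    have "az * Tv \<le> S * P powr (-1-e) * (C0 * Q powr (-e))"
      using base az(3) C0 unfolding P_def by (intro order.trans[OF base] mult_right_mono) auto
    also have "\<dots> \<le> ?Y * (?a + ?b) * ?R"
    proof (cases "2*z \<le> t")
      case True
      have "R/2 \<le> Q" using True unfolding R_def Q_def by simp
      then have "Q powr (-e) \<le> (R/2) powr (-e)" using R1 e by (intro powr_mono2') auto
      also have "\<dots> = 2 powr e * R powr (-e)" by (simp add: powr_divide powr_minus divide_simps)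
      also have "\<dots> \<le> 2 powr (1+e) * R powr (-e)" using two by (intro mult_right_mono) auto
      finally have q: "Q powr (-e) \<le> 2 powr (1+e) * R powr (-e)" .
      have "P powr (-1-e) = P powr (-1-e/2) * P powr (-e/2)" by (rule powr_split) simp
      also have "\<dots> \<le> P powr (-1-e/2) * (1+U0) powr (-e/2)"
        using rho1[of P] False unfolding P_def by (intro mult_left_mono) auto
      finally have p: "P powr (-1-e) \<le> P powr (-1-e/2) * (1+U0) powr (-e/2)" .
      have "S * P powr (-1-e) * (C0 * Q powr (-e)) \<le> S * (P powr (-1-e/2) * (1+U0) powr (-e/2)) * (C0 * (2 powr (1+e) * R powr (-e)))"
        using p q S C0 by (intro mult_mono mult_left_mono) auto
      also have "\<dots> = ?Y * ?a * ?R" unfolding P_def R_def by (simp add: algebra_simps)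
      also have "\<dots> \<le> ?Y * (?a + ?b) * ?R" using nn by (intro mult_right_mono mult_left_mono) auto
      finally show ?thesis .
    next
      case False2: False
      have "R/2 \<le> P" using False2 unfolding R_def P_def by simp
      then have "P powr (-1-e) \<le> (R/2) powr (-1-e)" using R1 e by (intro powr_mono2') auto
      also have "\<dots> = 2 powr (1+e) * R powr (-1-e)"
      proof -
        have "2 powr (1+e) * 2 powr (-1-e) = (2::real) powr 0" by (rule powr_split[symmetric]) simp
        then show ?thesis by (simp add: powr_divide powr_minus divide_simps)
      qed
      also have "R powr (-1-e) = R powr (-e) * R powr (-1+e/2) * R powr (-e/2)" by (rule powr_split3) simp
      also have "\<dots> \<le> R powr (-e) * R powr (-1+e/2) * (1+U0) powr (-e/2)"
        using rho1[of R] False z unfolding R_def by (intro mult_left_mono) auto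
      finally have p: "P powr (-1-e) \<le> 2 powr (1+e) * (R powr (-e) * R powr (-1+e/2) * (1+U0) powr (-e/2))"
        by simp
      have "S * P powr (-1-e) * (C0 * Q powr (-e)) \<le> S * (2 powr (1+e) * (R powr (-e) * R powr (-1+e/2) * (1+U0) powr (-e/2))) * (C0 * Q powr (-e))"
        using p S C0 by (intro mult_mono mult_left_mono) auto
      also have "\<dots> = ?Y * ?b * ?R" unfolding Q_def R_def by (simp add: algebra_simps)
      also have "\<dots> \<le> ?Y * (?a + ?b) * ?R" using nn by (intro mult_right_mono mult_left_mono) auto
      finally show ?thesis .
    qed
    also have "\<dots> \<le> ?R * (?X + ?Y * (?a + ?b))"
    proof -
      have "?R * (?X + ?Y*(?a+?b)) = ?R*?X + ?Y*(?a+?b)*?R" by (simp add: algebra_simps)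
      moreover have "0 \<le> ?R*?X" using nn(1,2) by (rule mult_nonneg_nonneg)
      ultimately show ?thesis by linarith
    qed
    finally show ?thesis .
  qed
qed

lemma inner:
  fixes g T :: "real \<Rightarrow> real" and e K0 S U0 C0 U t :: real
  assumes e: "0 < e" "e < 1" and U0: "0 \<le> U0" and K0: "0 \<le> K0" and S: "0 \<le> S" and C0: "0 \<le> C0"
    and t: "0 < t" "t \<le> U"
    and gK: "\<And>z. 0 \<le> z \<Longrightarrow> z \<le> U0 \<Longrightarrow> \<bar>g z\<bar> \<le> K0"
    and gS: "\<And>z. 0 \<le> z \<Longrightarrow> z \<le> U \<Longrightarrow> \<bar>g z\<bar> \<le> S * (1+z) powr (-1-e)"
    and T0: "\<And>s. 0 \<le> T s" and Tb: "\<And>s. 0 < s \<Longrightarrow> T s \<le> C0 * (1+s) powr (-e)"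
  shows "\<bar>LINT z:{0<..<t}|lborel. g z * T (t-z)\<bar> \<le> (1+t) powr (-e) *
     (K0*C0*(1+U0) powr (1+2*e) / e + S * (1+U0) powr (-e/2) * (C0*2 powr (1+e)) * (2/e + 1/(1-e)))"
proof -
  define X where "X = K0*C0*(1+U0) powr (1+2*e)"
  define Y where "Y = S*(C0*2 powr (1+e))*(1+U0) powr (-e/2)"
  define f1 where "f1 = (\<lambda>z::real. (1+z) powr (-1-e))"
  define f2 where "f2 = (\<lambda>z::real. (1+z) powr (-1-e/2))"
  define f3 where "f3 = (\<lambda>z::real. (1+t-z) powr (-e))"
  define R where "R = (1+t) powr (-e)"
  define W where "W = (1+t) powr (-1+e/2)"
  have X0: "0 \<le> X" and Y0: "0 \<le> Y" and R0: "0 \<le> R" and W0: "0 \<le> W"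
    using K0 C0 S unfolding X_def Y_def R_def W_def by auto
  have i1: "set_integrable lborel {0<..<t} f1" "(LINT z:{0<..<t}|lborel. f1 z) \<le> 1/e"
    using Int2[OF t(1) e(1)] unfolding f1_def by auto
  have i2: "set_integrable lborel {0<..<t} f2" "(LINT z:{0<..<t}|lborel. f2 z) \<le> 1/(e/2)"
    using Int2[OF t(1), of "e/2"] e unfolding f2_def by auto
  have i3: "set_integrable lborel {0<..<t} f3" "(LINT z:{0<..<t}|lborel. f3 z) \<le> (1+t) powr (1-e) / (1-e)"
    using Int3[OF t(1) e] unfolding f3_def by auto
  define b where "b = (\<lambda>z. R * (X * f1 z + Y * (f2 z + W * f3 z)))"
  have ib: "set_integrable lborel {0<..<t} b"
    unfolding b_def using i1(1) i2(1) i3(1)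
    by (intro set_integrable_mult_right set_integral_add(1)) auto
  have Lb: "(LINT z:{0<..<t}|lborel. b z) = R * (X * (LINT z:{0<..<t}|lborel. f1 z) + Y * ((LINT z:{0<..<t}|lborel. f2 z) + W * (LINT z:{0<..<t}|lborel. f3 z)))"
  proof -
    have a: "set_integrable lborel {0<..<t} (\<lambda>z. X * f1 z)" "set_integrable lborel {0<..<t} (\<lambda>z. W * f3 z)"
      using i1(1) i3(1) by auto
    have c: "set_integrable lborel {0<..<t} (\<lambda>z. f2 z + W * f3 z)" using i2(1) a(2) by auto
    have d: "set_integrable lborel {0<..<t} (\<lambda>z. Y * (f2 z + W * f3 z))" using c by auto
    show ?thesis unfolding b_def
      by (simp add: set_integral_add(2)[OF a(1) d] set_integral_add(2)[OF i2(1) a(2)])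
  qed
  have "\<bar>LINT z:{0<..<t}|lborel. g z * T (t-z)\<bar> \<le> (LINT z:{0<..<t}|lborel. b z)"
  proof (rule L1[OF ib])
    fix z assume z: "z \<in> {0<..<t}"
    have tz: "T (t-z) \<le> C0 * (1+t-z) powr (-e)" using Tb[of "t-z"] z by (simp add: add_diff_eq)
    have "\<bar>g z * T (t-z)\<bar> = \<bar>g z\<bar> * T (t-z)" using T0 by (simp add: abs_mult)
    also have "\<dots> \<le> b z" using tz unfolding b_def R_def X_def Y_def f1_def f2_def f3_def W_def
      using z t by (intro pw[where az="\<bar>g z\<bar>" and Tv="T (t-z)"] e U0 K0 S C0 T0 gK gS) auto
    finally show "\<bar>g z * T (t-z)\<bar> \<le> b z" .
  qed
  also have "\<dots> \<le> R * (X * (1/e) + Y * (2/e + W * ((1+t) powr (1-e) / (1-e))))"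
    unfolding Lb using i1(2) i2(2) i3(2) X0 Y0 R0 W0
    by (intro mult_left_mono add_mono mult_left_mono) auto
  also have "\<dots> \<le> R * (X * (1/e) + Y * (2/e + 1/(1-e)))"
  proof -
    have "W * (1+t) powr (1-e) = (1+t) powr (-e/2)" unfolding W_def
      by (rule powr_split[symmetric]) simp
    also have "\<dots> \<le> 1" using powr_mono2'[of "-e/2" 1 "1+t"] t e by simp
    finally have "W * ((1+t) powr (1-e) / (1-e)) \<le> 1/(1-e)" using e by (simp add: divide_simps)
    then show ?thesis using X0 Y0 R0 by (intro mult_left_mono add_mono) auto
  qed
  finally show ?thesis unfolding R_def X_def Y_def by (simp add: algebra_simps)
qed

lemma outer:
  fixes k T :: "real \<Rightarrow> real" and e G A m p D u :: real
  assumes e: "0 < e" and G: "G > 1 + e" and A: "0 < A" and m: "0 \<le> m" and D: "0 \<le> D" and u: "0 < u"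
    and hb: "\<And>t. 0 < t \<Longrightarrow> t < u \<Longrightarrow> \<bar>p * T t + k t\<bar> \<le> D * (1+t) powr (-e)"
  shows "\<bar>m / (u powr G * exp (- A / u)) * (LINT t:{0<..<u}|lborel. t powr (G-2) * exp (- A / t) * (p * T t + k t))\<bar>
     \<le> m * D / (G-1-e) * u powr (-1-e)"
proof -
  define b where "b = (\<lambda>t. exp (- A / u) * D * t powr (G-2-e))"
  have i: "set_integrable lborel {0<..<u} (\<lambda>x. x powr (G-2-e))"
     "(LINT x:{0<..<u}|lborel. x powr (G-2-e)) = u powr (G-2-e+1) / (G-2-e+1)"
    using Int1[OF u, of "G-2-e"] G by auto
  have ib: "set_integrable lborel {0<..<u} b" unfolding b_def using i(1) by auto
  have Lb: "(LINT t:{0<..<u}|lborel. b t) = exp (- A / u) * D * (u powr (G-1-e) / (G-1-e))"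
    unfolding b_def using i(2) by (simp add: algebra_simps)
  have "\<bar>LINT t:{0<..<u}|lborel. t powr (G-2) * exp (- A / t) * (p * T t + k t)\<bar> \<le> (LINT t:{0<..<u}|lborel. b t)"
  proof (rule L1[OF ib])
    fix t assume t: "t \<in> {0<..<u}"
    have ex: "exp (- A / t) \<le> exp (- A / u)" using t A by (auto simp: divide_simps)
    have pw1: "(1+t) powr (-e) \<le> t powr (-e)" using t e by (intro powr_mono2') auto
    have hb2: "\<bar>p * T t + k t\<bar> \<le> D * t powr (-e)"
      using hb[of t] t pw1 D by (meson mult_left_mono order_trans greaterThanLessThan_iff)
    have "\<bar>t powr (G-2) * exp (- A / t) * (p * T t + k t)\<bar> = t powr (G-2) * exp (- A / t) * \<bar>p * T t + k t\<bar>"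
      by (simp add: abs_mult)
    also have "\<dots> \<le> t powr (G-2) * exp (- A / u) * (D * t powr (-e))"
      using hb2 t ex D by (intro mult_mono mult_left_mono) auto
    also have "\<dots> = b t" unfolding b_def
    proof -
      have "t powr (G-2-e) = t powr (G-2) * t powr (-e)" by (rule powr_split) simp
      then show "t powr (G-2) * exp (- A / u) * (D * t powr (-e)) = exp (- A / u) * D * t powr (G-2-e)"
        by simp
    qed
    finally show "\<bar>t powr (G-2) * exp (- A / t) * (p * T t + k t)\<bar> \<le> b t" .
  qed
  then have "\<bar>m / (u powr G * exp (- A / u)) * (LINT t:{0<..<u}|lborel. t powr (G-2) * exp (- A / t) * (p * T t + k t))\<bar>
      \<le> m / (u powr G * exp (- A / u)) * (exp (- A / u) * D * (u powr (G-1-e) / (G-1-e)))"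
  proof -
    have c0: "0 \<le> m / (u powr G * exp (- A / u))" using m u by simp
    show ?thesis unfolding Lb abs_mult using c0 \<open>\<bar>_\<bar> \<le> _\<close>[unfolded Lb]
      by (simp only: abs_of_nonneg[OF c0]) (rule mult_left_mono)
  qed
  also have "\<dots> = m * D / (G-1-e) * (u powr (G-1-e) / u powr G)" using u by (simp add: field_simps)
  also have "u powr (G-1-e) / u powr G = u powr (-1-e)"
  proof -
    have "u powr (G-1-e) = u powr G * u powr (-1-e)" by (rule powr_split) simp
    then show ?thesis using u by simp
  qed
  finally show ?thesis .
qed

theorem lemma3:
  fixes M :: "'a measure" and xi :: "'a \<Rightarrow> real"
    and \<kappa> a r \<sigma> c lam \<epsilon> p :: real and g :: "real \<Rightarrow> real"
  assumes M: "prob_space M"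
    and xi_rv: "xi \<in> borel_measurable M"
    and xi_pos: "AE \<omega> in M. xi \<omega> > 0"
    and \<kappa>: "0 < \<kappa>" "\<kappa> \<le> 1" and r: "0 \<le> r" and \<sigma>: "0 < \<sigma>"
    and c: "0 < c" and lam: "0 < lam"
    and A1: "distr_fun M xi 0 = 0"
    and A3: "2 * ((a - r) * \<kappa> + r) / (\<kappa>^2 * \<sigma>^2) > 1"
    and \<epsilon>: "0 < \<epsilon>" "\<epsilon> < 1"
    and mom: "integrable M (\<lambda>\<omega>. xi \<omega> powr \<epsilon>)"
    and \<gamma>\<epsilon>: "2 * ((a - r) * \<kappa> + r) / (\<kappa>^2 * \<sigma>^2) - 1 - \<epsilon> > 0"
    and p: "0 < p"
    and g_cont: "continuous_on {0..} g"
    and g_eq: "\<And>u. u > 0 \<Longrightarrow>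
       g u = (2 * lam / (\<kappa>^2 * \<sigma>^2)) /
               (u powr (2 * ((a - r) * \<kappa> + r) / (\<kappa>^2 * \<sigma>^2))
                * exp (- (2 * c / (\<kappa>^2 * \<sigma>^2)) / u))
             * (LINT t:{0<..<u}|lborel.
                  t powr (2 * ((a - r) * \<kappa> + r) / (\<kappa>^2 * \<sigma>^2) - 2)
                  * exp (- (2 * c / (\<kappa>^2 * \<sigma>^2)) / t)
                  * (p * tail_fun M xi t
                     + (LINT z:{0<..<t}|lborel. g z * tail_fun M xi (t - z))))"
  shows "g \<in> O[at_top](\<lambda>u. u powr (-1 - \<epsilon>)) \<and> set_integrable lborel {0..} g"
proof -
  define G where "G = 2 * ((a - r) * \<kappa> + r) / (\<kappa>^2 * \<sigma>^2)"
  define A where "A = 2 * c / (\<kappa>^2 * \<sigma>^2)"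
  define m where "m = 2 * lam / (\<kappa>^2 * \<sigma>^2)"
  define T where "T = tail_fun M xi"
  define B where "B = (\<integral>\<omega>. xi \<omega> powr \<epsilon> \<partial>M)"
  define C0 where "C0 = 2 * (1 + B)"
  have G1: "G > 1 + \<epsilon>" using \<gamma>\<epsilon> unfolding G_def by simp
  have A0: "A > 0" using c \<kappa> \<sigma> unfolding A_def by simp
  have m0: "m > 0" using lam \<kappa> \<sigma> unfolding m_def by simp
  note tb = tail_bounds[OF M xi_rv \<epsilon> mom]
  have B0: "0 \<le> B" using tb(1) unfolding B_def .
  have C00: "0 \<le> C0" using B0 unfolding C0_def by simp
  have T0: "\<And>s. 0 \<le> T s" using tb(2) unfolding T_def .
  have Tb: "\<And>s. 0 < s \<Longrightarrow> T s \<le> C0 * (1+s) powr (-\<epsilon>)" using tb(4) unfolding T_def C0_def B_def .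
  have geq: "\<And>u. u > 0 \<Longrightarrow> g u = m / (u powr G * exp (- A / u)) *
      (LINT t:{0<..<u}|lborel. t powr (G-2) * exp (- A / t) * (p * T t + (LINT z:{0<..<t}|lborel. g z * T (t-z))))"
    unfolding G_def A_def m_def T_def by (rule g_eq)
  define E2 where "E2 = C0 * 2 powr (1+\<epsilon>)"
  define E3 where "E3 = E2 * (2/\<epsilon> + 1/(1-\<epsilon>))"
  define E4 where "E4 = 2 powr (1+\<epsilon>) * m / (G-1-\<epsilon>)"
  define U0 where "U0 = max 1 ((2*E3*E4) powr (2/\<epsilon>))"
  define \<rho> where "\<rho> = (1+U0) powr (-\<epsilon>/2)"
  have E30: "0 \<le> E3" using C00 \<epsilon> unfolding E3_def E2_def by simp
  have E40: "0 < E4" using m0 G1 unfolding E4_def by simp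
  have U01: "1 \<le> U0" unfolding U0_def by simp
  have rho0: "0 \<le> \<rho>" unfolding \<rho>_def by simp
  have rho: "\<rho> * E3 * E4 \<le> 1/2"
  proof (cases "E3 = 0")
    case True then show ?thesis by simp
  next
    case False
    then have pos: "0 < 2*E3*E4" using E30 E40 by simp
    have "2*E3*E4 = ((2*E3*E4) powr (2/\<epsilon>)) powr (\<epsilon>/2)" using pos \<epsilon> by (simp add: powr_powr)
    also have "\<dots> \<le> (1+U0) powr (\<epsilon>/2)" unfolding U0_def using \<epsilon> by (intro powr_mono2) auto
    finally have a: "2*E3*E4 \<le> (1+U0) powr (\<epsilon>/2)" .
    have r1: "\<rho> * (1+U0) powr (\<epsilon>/2) = 1" unfolding \<rho>_def using U01
      by (simp add: powr_minus divide_simps)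
    have "\<rho> * (2*E3*E4) \<le> \<rho> * (1+U0) powr (\<epsilon>/2)" using a rho0 by (rule mult_left_mono)
    then have "\<rho> * (2*E3*E4) \<le> 1" using r1 by simp
    then show ?thesis by (simp add: algebra_simps)
  qed
  obtain K0 where K0: "0 \<le> K0" "\<And>z. 0 \<le> z \<Longrightarrow> z \<le> U0 \<Longrightarrow> \<bar>g z\<bar> \<le> K0"
  proof -
    have "compact (g ` {0..U0})"
      by (rule compact_continuous_image[OF continuous_on_subset[OF g_cont]]) auto
    then obtain K where "\<forall>x\<in>g ` {0..U0}. norm x \<le> K" using compact_imp_bounded bounded_iff by metis
    then have "\<And>z. 0 \<le> z \<Longrightarrow> z \<le> U0 \<Longrightarrow> \<bar>g z\<bar> \<le> max K 0"
      by (metis atLeastAtMost_iff image_eqI max.coboundedI1 real_norm_def)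
    then show ?thesis using that[of "max K 0"] by simp
  qed
  define E1 where "E1 = K0*C0*(1+U0) powr (1+2*\<epsilon>) / \<epsilon>"
  have E10: "0 \<le> E1" using K0 C00 \<epsilon> unfolding E1_def by simp
  define Bf where "Bf = max (K0 * (1+U0) powr (1+\<epsilon>)) (2*E4*(p*C0 + E1))"
  have key: "\<bar>g z\<bar> * (1+z) powr (1+\<epsilon>) \<le> Bf" if U: "U0 \<le> U" and z: "0 \<le> z" "z \<le> U" for U z
  proof -
    define h where "h = (\<lambda>z. \<bar>g z\<bar> * (1+z) powr (1+\<epsilon>))"
    define S where "S = Sup (h ` {0..U})"
    have "continuous_on {0..U} h" unfolding h_def
      using continuous_on_subset[OF g_cont] by (intro continuous_intros) auto
    then have "compact (h ` {0..U})" by (rule compact_continuous_image) auto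
    then have bdd: "bdd_above (h ` {0..U})" by (intro bounded_imp_bdd_above compact_imp_bounded)
    have Su: "\<And>z. 0 \<le> z \<Longrightarrow> z \<le> U \<Longrightarrow> h z \<le> S" unfolding S_def by (rule cSup_upper[OF _ bdd]) auto
    have "0 \<le> h 0" unfolding h_def by simp
    then have S0: "0 \<le> S" using Su[of 0] U U01 by linarith
    have gS: "\<bar>g z\<bar> \<le> S * (1+z) powr (-1-\<epsilon>)" if "0 \<le> z" "z \<le> U" for z
    proof -
      have "\<bar>g z\<bar> = h z * (1+z) powr (-1-\<epsilon>)"
      proof -
        have "(1+z) powr (1+\<epsilon>) * (1+z) powr (-1-\<epsilon>) = (1+z) powr 0" by (rule powr_split[symmetric]) simp
        then show ?thesis unfolding h_def using that by (simp add: mult.assoc)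
      qed
      also have "\<dots> \<le> S * (1+z) powr (-1-\<epsilon>)" using Su[OF that] by (intro mult_right_mono) auto
      finally show ?thesis .
    qed
    have kb: "\<bar>LINT z:{0<..<t}|lborel. g z * T (t-z)\<bar> \<le> (1+t) powr (-\<epsilon>) * (E1 + S * \<rho> * E3)"
      if "0 < t" "t \<le> U" for t
    proof -
      have "\<bar>LINT z:{0<..<t}|lborel. g z * T (t-z)\<bar> \<le> (1+t) powr (-\<epsilon>) *
          (K0*C0*(1+U0) powr (1+2*\<epsilon>) / \<epsilon> + S * (1+U0) powr (-\<epsilon>/2) * (C0*2 powr (1+\<epsilon>)) * (2/\<epsilon> + 1/(1-\<epsilon>)))"
        using U01 by (intro inner[OF \<epsilon> _ K0(1) S0 C00 that K0(2) gS T0 Tb]) auto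
      then show ?thesis unfolding E1_def E3_def E2_def \<rho>_def by (simp add: algebra_simps)
    qed
    define D where "D = p*C0 + E1 + S*\<rho>*E3"
    have D0: "0 \<le> D" unfolding D_def using p C00 E10 S0 rho0 E30 by simp
    have gu: "\<bar>g u\<bar> \<le> m * D / (G-1-\<epsilon>) * u powr (-1-\<epsilon>)" if u: "0 < u" "u \<le> U" for u
    proof -
      have "\<bar>g u\<bar> = \<bar>m / (u powr G * exp (- A / u)) *
        (LINT t:{0<..<u}|lborel. t powr (G-2) * exp (- A / t) * (p * T t + (LINT z:{0<..<t}|lborel. g z * T (t-z))))\<bar>"
        using geq[OF u(1)] by simp
      also have "\<dots> \<le> m * D / (G-1-\<epsilon>) * u powr (-1-\<epsilon>)"
      proof (rule outer[OF \<epsilon>(1) G1 A0 _ D0 u(1)])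
        show "0 \<le> m" using m0 by simp
        fix t assume t: "0 < t" "t < u"
        have "\<bar>p * T t + (LINT z:{0<..<t}|lborel. g z * T (t-z))\<bar> \<le> p * T t + \<bar>LINT z:{0<..<t}|lborel. g z * T (t-z)\<bar>"
          using abs_triangle_ineq[of "p * T t" "LINT z:{0<..<t}|lborel. g z * T (t-z)"] mult_nonneg_nonneg[OF less_imp_le[OF p] T0[of t]]
          by simp
        also have "\<dots> \<le> p * (C0 * (1+t) powr (-\<epsilon>)) + (1+t) powr (-\<epsilon>) * (E1 + S * \<rho> * E3)"
          using Tb[OF t(1)] kb[of t] t u p by (intro add_mono mult_left_mono) auto
        also have "\<dots> = D * (1+t) powr (-\<epsilon>)" unfolding D_def by (simp add: algebra_simps)
        finally show "\<bar>p * T t + (LINT z:{0<..<t}|lborel. g z * T (t-z))\<bar> \<le> D * (1+t) powr (-\<epsilon>)" .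
      qed
      finally show ?thesis .
    qed
    have all: "h z \<le> max (K0 * (1+U0) powr (1+\<epsilon>)) (E4*(p*C0+E1) + S/2)" if z: "0 \<le> z" "z \<le> U" for z
    proof (cases "z \<le> U0")
      case True
      have "h z \<le> K0 * (1+U0) powr (1+\<epsilon>)" unfolding h_def
        using K0(2)[OF z(1) True] True z K0(1) \<epsilon> by (intro mult_mono powr_mono2) auto
      then show ?thesis by simp
    next
      case False
      then have z1: "1 \<le> z" using U01 by simp
      have "(1+z) powr (1+\<epsilon>) \<le> (2*z) powr (1+\<epsilon>)" using z1 \<epsilon> by (intro powr_mono2) auto
      also have "\<dots> = 2 powr (1+\<epsilon>) * z powr (1+\<epsilon>)" using z1 by (simp add: powr_mult)
      finally have a: "(1+z) powr (1+\<epsilon>) \<le> 2 powr (1+\<epsilon>) * z powr (1+\<epsilon>)" .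
      have "h z \<le> (m * D / (G-1-\<epsilon>) * z powr (-1-\<epsilon>)) * (2 powr (1+\<epsilon>) * z powr (1+\<epsilon>))"
        unfolding h_def using gu[of z] z z1 a by (intro mult_mono) auto
      also have "\<dots> = E4 * D"
      proof -
        have "z powr (-1-\<epsilon>) * z powr (1+\<epsilon>) = z powr 0" by (rule powr_split[symmetric]) simp
        then have "z powr (-1-\<epsilon>) * z powr (1+\<epsilon>) = 1" using z1 by simp
        then show ?thesis unfolding E4_def by (simp add: field_simps)
      qed
      also have "\<dots> = E4*(p*C0+E1) + S * (\<rho> * E3 * E4)" unfolding D_def by (simp add: algebra_simps)
      also have "\<dots> \<le> E4*(p*C0+E1) + S * (1/2)" using rho S0 by (intro add_left_mono mult_left_mono) auto
      finally show ?thesis by simp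
    qed
    have "Sup (h ` {0..U}) \<le> max (K0 * (1+U0) powr (1+\<epsilon>)) (E4*(p*C0+E1) + S/2)"
      using U U01 by (intro cSup_least) (auto intro: all)
    then have "S \<le> max (K0 * (1+U0) powr (1+\<epsilon>)) (E4*(p*C0+E1) + S/2)"
      unfolding S_def[symmetric] .
    then have "S \<le> Bf" unfolding Bf_def by (auto simp: max_def split: if_splits)
    then show ?thesis using Su[OF z] unfolding h_def by simp
  qed
  have gb: "\<bar>g z\<bar> \<le> Bf * (1+z) powr (-1-\<epsilon>)" if z: "0 \<le> z" for z
  proof -
    have k: "\<bar>g z\<bar> * (1+z) powr (1+\<epsilon>) \<le> Bf" using key[of "max U0 z" z] z by simp
    have "(1+z) powr (1+\<epsilon>) * (1+z) powr (-1-\<epsilon>) = (1+z) powr 0" by (rule powr_split[symmetric]) simp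
    then have e1: "(1+z) powr (1+\<epsilon>) * (1+z) powr (-1-\<epsilon>) = 1" using z by simp
    have "\<bar>g z\<bar> = \<bar>g z\<bar> * (1+z) powr (1+\<epsilon>) * (1+z) powr (-1-\<epsilon>)" using e1 by (simp add: mult.assoc)
    also have "\<dots> \<le> Bf * (1+z) powr (-1-\<epsilon>)" using k by (intro mult_right_mono) auto
    finally show ?thesis .
  qed
  show ?thesis
  proof
    show "g \<in> O[at_top](\<lambda>u. u powr (-1 - \<epsilon>))"
    proof (rule bigoI[where c=Bf])
      show "\<forall>\<^sub>F x in at_top. norm (g x) \<le> Bf * norm (x powr (-1 - \<epsilon>))"
        unfolding eventually_at_top_linorder
      proof (intro exI allI impI)
        fix x :: real assume x: "1 \<le> x"
        have "0 \<le> K0 * (1+U0) powr (1+\<epsilon>)" using K0(1) by simp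
        then have Bf0: "0 \<le> Bf" unfolding Bf_def by (rule max.coboundedI1)
        have "(1+x) powr (-1-\<epsilon>) \<le> x powr (-1-\<epsilon>)" using x \<epsilon> by (intro powr_mono2') auto
        then have "Bf * (1+x) powr (-1-\<epsilon>) \<le> Bf * x powr (-1-\<epsilon>)" using Bf0 by (intro mult_left_mono)
        then show "norm (g x) \<le> Bf * norm (x powr (-1 - \<epsilon>))" using gb[of x] x by simp
      qed
    qed
    have ib0: "set_integrable lborel {0<..} (\<lambda>x. Bf * (1+x) powr (-1-\<epsilon>))"
      using Int4[OF \<epsilon>(1)] by auto
    have ib1: "set_integrable lborel {0..0} (\<lambda>x. Bf * (1+x) powr (-1-\<epsilon>))"
      by (rule borel_integrable_atLeastAtMost') (auto intro!: continuous_intros)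
    have "{0<..} \<union> {0..0} = {0::real..}" by auto
    then have ib: "set_integrable lborel {0..} (\<lambda>x. Bf * (1+x) powr (-1-\<epsilon>))"
      using set_integrable_Un[OF ib0 ib1] by simp
    have meas: "set_borel_measurable lborel {0..} g"
      unfolding set_borel_measurable_def
      using borel_measurable_continuous_on_indicator[OF _ g_cont] by simp
    show "set_integrable lborel {0..} g"
      by (rule set_integrable_bound[OF ib meas]) (auto intro!: AE_I2 intro: order_trans[OF gb abs_ge_self])
  qed
qed

end
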